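(* Fix constants $0\le\delta\le1$, $\gamma>0$, $M>0$, $\alpha>1$. There is a constant $X_0$ (depending only on these fixed constants, not on $E,P,Q$) such that the following holds. Let $E/\mathbb{Q}$ be given by the model $y^2=x^3+Ax+B$ ($A,B\in\mathbb{Z}$) described in the context, with $X=\max\{|A|^3,|B|^2\}\ge X_0$. Let $P,Q\in E(\mathbb{Q})$ satisfy $X^{1/6}\le x(P)<x(Q)$, $x(P)=x_1/s$, $x(Q)=x_2/s$ with $x_1,x_2\in\mathbb{Z}$, $s$ a positive integer, $\gcd(x_1,s)\le s^\delta$, $\gcd(x_2,s)\le s^\delta$, and $$h(s)\le\tfrac1\gamma\log X,\qquad \hat{h}(P),\hat{h}(Q)>M\log X,\qquad \max\Big\{\tfrac{\hat{h}(Q)}{\hat{h}(P)},\tfrac{\hat{h}(P)}{\hat{h}(Q)}\Big\}\le\alpha.$$ Then $$\cos\theta_{P,Q}\le \frac{\sqrt\alpha}{2}+\frac{3\delta}{2M\gamma}+\frac1M.$$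
   Context: The model is obtained from a global minimal Weierstrass equation of $E$ by the substitution $x\mapsto \frac{1}{36}(x-3b_2)$, $y\mapsto \frac12(\frac{y}{108}-\frac{a_1}{36}(x-3b_2)-a_3)$. $h$ is the absolute logarithmic Weil height, $h(P)=h(x(P))$, $\hat{h}(P)=\lim_{n\to\infty}h(2^nP)/4^n$ (not normalized by $1/2$). For non-torsion $P,Q\in E(\mathbb{Q})$, $\cos\theta_{P,Q}:=\dfrac{\hat{h}(P+Q)-\hat{h}(P)-\hat{h}(Q)}{2\sqrt{\hat{h}(P)\hat{h}(Q)}}$. *)

theory Defs
  imports Complex_Main
begin

definition wb2 :: "'a::comm_ring_1 \<Rightarrow> 'a \<Rightarrow> 'a \<Rightarrow> 'a \<Rightarrow> 'a \<Rightarrow> 'a" where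
  "wb2 a1 a2 a3 a4 a6 = a1^2 + 4*a2"
definition wb4 :: "'a::comm_ring_1 \<Rightarrow> 'a \<Rightarrow> 'a \<Rightarrow> 'a \<Rightarrow> 'a \<Rightarrow> 'a" where
  "wb4 a1 a2 a3 a4 a6 = 2*a4 + a1*a3"
definition wb6 :: "'a::comm_ring_1 \<Rightarrow> 'a \<Rightarrow> 'a \<Rightarrow> 'a \<Rightarrow> 'a \<Rightarrow> 'a" where
  "wb6 a1 a2 a3 a4 a6 = a3^2 + 4*a6"
definition wb8 :: "'a::comm_ring_1 \<Rightarrow> 'a \<Rightarrow> 'a \<Rightarrow> 'a \<Rightarrow> 'a \<Rightarrow> 'a" where
  "wb8 a1 a2 a3 a4 a6 = a1^2*a6 + 4*a2*a6 - a1*a3*a4 + a2*a3^2 - a4^2"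
definition wc4 :: "'a::comm_ring_1 \<Rightarrow> 'a \<Rightarrow> 'a \<Rightarrow> 'a \<Rightarrow> 'a \<Rightarrow> 'a" where
  "wc4 a1 a2 a3 a4 a6 = (wb2 a1 a2 a3 a4 a6)^2 - 24 * wb4 a1 a2 a3 a4 a6"
definition wc6 :: "'a::comm_ring_1 \<Rightarrow> 'a \<Rightarrow> 'a \<Rightarrow> 'a \<Rightarrow> 'a \<Rightarrow> 'a" where
  "wc6 a1 a2 a3 a4 a6 = - ((wb2 a1 a2 a3 a4 a6)^3)
     + 36 * wb2 a1 a2 a3 a4 a6 * wb4 a1 a2 a3 a4 a6 - 216 * wb6 a1 a2 a3 a4 a6"
definition wdisc :: "'a::comm_ring_1 \<Rightarrow> 'a \<Rightarrow> 'a \<Rightarrow> 'a \<Rightarrow> 'a \<Rightarrow> 'a" where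
  "wdisc a1 a2 a3 a4 a6 =
     - ((wb2 a1 a2 a3 a4 a6)^2) * wb8 a1 a2 a3 a4 a6 - 8 * (wb4 a1 a2 a3 a4 a6)^3
     - 27 * (wb6 a1 a2 a3 a4 a6)^2
     + 9 * wb2 a1 a2 a3 a4 a6 * wb4 a1 a2 a3 a4 a6 * wb6 a1 a2 a3 a4 a6"

text \<open>Coefficients after the change of variables x = u^2 x' + r, y = u^3 y' + s u^2 x' + t
  (Silverman, Table 3.1).\<close>
definition wchange :: "rat \<Rightarrow> rat \<Rightarrow> rat \<Rightarrow> rat \<Rightarrow> rat \<times> rat \<times> rat \<times> rat \<times> rat
    \<Rightarrow> rat \<times> rat \<times> rat \<times> rat \<times> rat" where
  "wchange u r s t c = (case c of (a1, a2, a3, a4, a6) \<Rightarrow>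
     ((a1 + 2*s) / u,
      (a2 - s*a1 + 3*r - s^2) / u^2,
      (a3 + r*a1 + 2*t) / u^3,
      (a4 - s*a3 + 2*r*a2 - (t + r*s)*a1 + 3*r^2 - 2*s*t) / u^4,
      (a6 + r*a4 + r^2*a2 + r^3 - t*a3 - t^2 - r*t*a1) / u^6))"

definition wdisc_tuple :: "rat \<times> rat \<times> rat \<times> rat \<times> rat \<Rightarrow> rat" where
  "wdisc_tuple c = (case c of (a1, a2, a3, a4, a6) \<Rightarrow> wdisc a1 a2 a3 a4 a6)"

definition integral_tuple :: "rat \<times> rat \<times> rat \<times> rat \<times> rat \<Rightarrow> bool" where
  "integral_tuple c = (case c of (a1, a2, a3, a4, a6) \<Rightarrow>
     a1 \<in> \<int> \<and> a2 \<in> \<int> \<and> a3 \<in> \<int> \<and> a4 \<in> \<int> \<and> a6 \<in> \<int>)"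

definition global_minimal :: "int \<Rightarrow> int \<Rightarrow> int \<Rightarrow> int \<Rightarrow> int \<Rightarrow> bool" where
  "global_minimal a1 a2 a3 a4 a6 \<longleftrightarrow>
     wdisc a1 a2 a3 a4 a6 \<noteq> 0 \<and>
     (\<forall>u r s t :: rat. u \<noteq> 0 \<longrightarrow>
        integral_tuple (wchange u r s t (of_int a1, of_int a2, of_int a3, of_int a4, of_int a6)) \<longrightarrow>
        \<bar>of_int (wdisc a1 a2 a3 a4 a6)\<bar>
          \<le> \<bar>wdisc_tuple (wchange u r s t (of_int a1, of_int a2, of_int a3, of_int a4, of_int a6))\<bar>)"

text \<open>None is the point at infinity; Some (x, y) is an affine point.\<close>
type_synonym qpoint = "(rat \<times> rat) option"

definition on_curve :: "int \<Rightarrow> int \<Rightarrow> qpoint \<Rightarrow> bool" where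
  "on_curve A B P = (case P of None \<Rightarrow> True
     | Some (x, y) \<Rightarrow> y^2 = x^3 + of_int A * x + of_int B)"

definition ec_add :: "int \<Rightarrow> qpoint \<Rightarrow> qpoint \<Rightarrow> qpoint" where
  "ec_add A P Q = (case P of None \<Rightarrow> Q | Some (x1, y1) \<Rightarrow>
     (case Q of None \<Rightarrow> P | Some (x2, y2) \<Rightarrow>
        (if x1 = x2 \<and> y1 = - y2 then None
         else let l = (if x1 = x2 then (3 * x1^2 + of_int A) / (2 * y1)
                       else (y2 - y1) / (x2 - x1));
                  x3 = l^2 - x1 - x2;
                  y3 = l * (x1 - x3) - y1
              in Some (x3, y3))))"

definition weil_h :: "rat \<Rightarrow> real" where
  "weil_h q = (case quotient_of q of (n, d) \<Rightarrow> ln (real_of_int (max \<bar>n\<bar> \<bar>d\<bar>)))"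

definition pt_h :: "qpoint \<Rightarrow> real" where
  "pt_h P = (case P of None \<Rightarrow> 0 | Some (x, y) \<Rightarrow> weil_h x)"

text \<open>Canonical height (not normalised by 1/2): lim h(2^n P) / 4^n.\<close>
definition can_h :: "int \<Rightarrow> qpoint \<Rightarrow> real" where
  "can_h A P = lim (\<lambda>n. pt_h (((\<lambda>R. ec_add A R R) ^^ n) P) / 4 ^ n)"

definition cos_theta :: "int \<Rightarrow> qpoint \<Rightarrow> qpoint \<Rightarrow> real" where
  "cos_theta A P Q = (can_h A (ec_add A P Q) - can_h A P - can_h A Q)
                       / (2 * sqrt (can_h A P * can_h A Q))"

end

theory Submission
  imports Defs
begin

lemma weil_h_frac:
  fixes n d :: int assumes "d \<noteq> 0"
  shows "weil_h (of_int n / of_int d) = ln (real_of_int (max \<bar>n\<bar> \<bar>d\<bar>) / real_of_int (gcd n d))"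
proof -
  define g where "g = gcd n d"
  have gpos: "g > 0" using assms by (simp add: g_def)
  have gn: "g dvd n" and gd: "g dvd d" by (simp_all add: g_def)
  have q: "quotient_of (of_int n / of_int d) = Rat.normalize (n, d)"
    by (simp add: quotient_of_Fract Fract_of_int_quotient[symmetric])
  have key: "real_of_int (max \<bar>n div c\<bar> \<bar>d div c\<bar>) = real_of_int (max \<bar>n\<bar> \<bar>d\<bar>) / real_of_int g"
    if "c = g \<or> c = - g" for c
  proof -
    have cn: "c dvd n" and cd: "c dvd d" using that gn gd by auto
    have "real_of_int \<bar>n div c\<bar> = real_of_int \<bar>n\<bar> / real_of_int g"
      using that gpos by (auto simp: of_int_div[OF cn] abs_divide)
    moreover have "real_of_int \<bar>d div c\<bar> = real_of_int \<bar>d\<bar> / real_of_int g"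
      using that gpos by (auto simp: of_int_div[OF cd] abs_divide)
    ultimately have "real_of_int (max \<bar>n div c\<bar> \<bar>d div c\<bar>) = max (real_of_int \<bar>n\<bar> / real_of_int g) (real_of_int \<bar>d\<bar> / real_of_int g)"
      by (simp only: of_int_max)
    also have "\<dots> = real_of_int (max \<bar>n\<bar> \<bar>d\<bar>) / real_of_int g"
      using gpos by (simp add: max_divide_distrib_right of_int_max)
    finally show ?thesis .
  qed
  show ?thesis
  proof (cases "d > 0")
    case True
    then show ?thesis unfolding weil_h_def q Rat.normalize_def using key[of g]
      by (simp add: Let_def g_def)
  next
    case False
    then have "d < 0" using assms by simp
    then show ?thesis unfolding weil_h_def q Rat.normalize_def using key[of "-g"]
      by (simp add: Let_def g_def)
  qed
qed

lemma weil_h_frac_le: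
  fixes n d :: int assumes "d \<noteq> 0"
  shows "weil_h (of_int n / of_int d) \<le> ln (real_of_int (max \<bar>n\<bar> \<bar>d\<bar>))"
proof -
  have g: "real_of_int (gcd n d) \<ge> 1" using assms
    by (metis gcd_eq_0_iff gcd_ge_0_int int_one_le_iff_zero_less le_less of_int_1_le_iff)
  have m: "real_of_int (max \<bar>n\<bar> \<bar>d\<bar>) > 0" using assms by auto
  have "real_of_int (max \<bar>n\<bar> \<bar>d\<bar>) / real_of_int (gcd n d) \<le> real_of_int (max \<bar>n\<bar> \<bar>d\<bar>)"
    using g m by (simp add: divide_le_eq)
  moreover have "real_of_int (max \<bar>n\<bar> \<bar>d\<bar>) / real_of_int (gcd n d) > 0" using g m by (intro divide_pos_pos) auto
  ultimately show ?thesis using weil_h_frac[OF assms] by simp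
qed

lemma weil_h_nonneg: "weil_h q \<ge> 0"
proof -
  obtain n d where nd: "quotient_of q = (n, d)" by (cases "quotient_of q")
  then have "d > 0" by (rule quotient_of_denom_pos)
  then show ?thesis using nd by (simp add: weil_h_def)
qed

lemma pt_h_nonneg: "pt_h P \<ge> 0"
  by (auto simp: pt_h_def weil_h_nonneg split: option.splits)

lemma weil_h_quot:
  assumes "quotient_of q = (a, d)"
  shows "weil_h q = ln (real_of_int (max \<bar>a\<bar> d))"
  using assms quotient_of_denom_pos[OF assms] by (simp add: weil_h_def)

lemma weil_h_int: "s > 0 \<Longrightarrow> weil_h (of_int s) = ln (real_of_int s)"
  using weil_h_frac[of 1 s] by simp


lemma dbl_alg: fixes x y l A B :: rat
  assumes "y^2 = x^3 + A*x + B" "l * (2*y) = 3*x^2 + A"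
  shows "(l*(x - (l^2 - x - x)) - y)^2 = (l^2-x-x)^3 + A*(l^2-x-x) + B"
  using assms by algebra

lemma add_alg: fixes x1 y1 x2 y2 l A B :: rat
  assumes "y1^2 = x1^3 + A*x1 + B" "y2^2 = x2^3 + A*x2 + B" "l * (x2-x1) = y2 - y1" "x1 \<noteq> x2"
  shows "(l*(x1 - (l^2 - x1 - x2)) - y1)^2 = (l^2-x1-x2)^3 + A*(l^2-x1-x2) + B"
  using assms by algebra

lemma ec_dbl_zero: "ec_add A (Some (x, 0)) (Some (x, 0)) = None"
  by (simp add: ec_add_def)

lemma ec_dbl_some:
  assumes "y \<noteq> 0"
  shows "ec_add A (Some (x, y)) (Some (x, y)) =
    (let l = (3 * x^2 + of_int A) / (2 * y); x3 = l^2 - x - x in Some (x3, l * (x - x3) - y))"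
  using assms by (simp add: ec_add_def Let_def)

lemma ec_add_some:
  assumes "x1 \<noteq> x2"
  shows "ec_add A (Some (x1, y1)) (Some (x2, y2)) =
    (let l = (y2 - y1) / (x2 - x1); x3 = l^2 - x1 - x2 in Some (x3, l * (x1 - x3) - y1))"
  using assms by (simp add: ec_add_def Let_def)

lemma on_curve_dbl:
  assumes "on_curve A B S" shows "on_curve A B (ec_add A S S)"
proof (cases S)
  case None then show ?thesis by (simp add: ec_add_def on_curve_def)
next
  case (Some p)
  then obtain x y where S: "S = Some (x, y)" by (cases p) auto
  show ?thesis
  proof (cases "y = 0")
    case True then show ?thesis using S by (simp add: ec_dbl_zero on_curve_def)
  next
    case False
    define l where "l = (3 * x^2 + of_int A) / (2 * y)"
    have l: "l * (2*y) = 3*x^2 + of_int A" using False by (simp add: l_def)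
    have c: "y^2 = x^3 + of_int A * x + of_int B" using assms S by (simp add: on_curve_def)
    show ?thesis using S False dbl_alg[OF c l]
      by (simp add: ec_dbl_some Let_def l_def[symmetric] on_curve_def)
  qed
qed

lemma on_curve_add:
  assumes "on_curve A B (Some (x1, y1))" "on_curve A B (Some (x2, y2))" "x1 \<noteq> x2"
  shows "on_curve A B (ec_add A (Some (x1, y1)) (Some (x2, y2)))"
proof -
  define l where "l = (y2 - y1) / (x2 - x1)"
  have l: "l * (x2 - x1) = y2 - y1" using assms(3) by (simp add: l_def)
  have c1: "y1^2 = x1^3 + of_int A * x1 + of_int B" using assms by (simp add: on_curve_def)
  have c2: "y2^2 = x2^3 + of_int A * x2 + of_int B" using assms by (simp add: on_curve_def)
  show ?thesis using add_alg[OF c1 c2 l assms(3)] assms(3)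
    by (simp add: ec_add_some Let_def l_def[symmetric] on_curve_def)
qed

lemma on_curve_iter:
  assumes "on_curve A B S" shows "on_curve A B (((\<lambda>R. ec_add A R R) ^^ n) S)"
  by (induction n) (auto simp: assms on_curve_dbl)

lemma dbl_x:
  fixes x y :: rat
  assumes "y^2 = x^3 + of_int A * x + of_int B" "y \<noteq> 0"
  shows "((3 * x^2 + of_int A) / (2 * y))^2 - x - x
      = (x^4 - 2*of_int A*x^2 - 8*of_int B*x + (of_int A)^2) / (4*(x^3 + of_int A*x + of_int B))"
proof -
  define f where "f = x^3 + of_int A * x + of_int B"
  have ne: "f \<noteq> 0" using assms by (metis f_def zero_eq_power2)
  have "((3 * x^2 + of_int A) / (2 * y))^2 = (3 * x^2 + of_int A)^2 / (4 * f)"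
    using assms by (simp add: power_divide power_mult_distrib f_def)
  also have "\<dots> - x - x = ((3 * x^2 + of_int A)^2 - 8*x*f) / (4*f)"
    using ne by (simp add: field_simps)
  also have "(3 * x^2 + of_int A)^2 - 8*x*f = x^4 - 2*of_int A*x^2 - 8*of_int B*x + (of_int A)^2"
    unfolding f_def by algebra
  finally show ?thesis by (simp add: f_def)
qed

lemma dbl_x_frac:
  fixes a d :: int and x :: rat
  assumes "x = of_int a / of_int d" "d \<noteq> 0" "x^3 + of_int A * x + of_int B \<noteq> 0"
  shows "(x^4 - 2*of_int A*x^2 - 8*of_int B*x + (of_int A)^2) / (4*(x^3 + of_int A*x + of_int B))
    = of_int (a^4 - 2*A*a^2*d^2 - 8*B*a*d^3 + A^2*d^4) / of_int (4*d*(a^3 + A*a*d^2 + B*d^3))"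
proof -
  have dd: "(of_int d :: rat) \<noteq> 0" using assms(2) by simp
  have ad: "(of_int a :: rat) = x * of_int d" using assms(1) dd by simp
  have e: "(of_int (a^3 + A*a*d^2 + B*d^3) :: rat) = (of_int d)^3 * (x^3 + of_int A * x + of_int B)"
    by (simp add: ad) algebra
  have e2: "(of_int (a^4 - 2*A*a^2*d^2 - 8*B*a*d^3 + A^2*d^4) :: rat) = (of_int d)^4 * (x^4 - 2*of_int A*x^2 - 8*of_int B*x + (of_int A)^2)"
    by (simp add: ad) algebra
  have "(of_int (4*d*(a^3 + A*a*d^2 + B*d^3)) :: rat) = (of_int d)^4 * (4*(x^3 + of_int A*x + of_int B))"
    by (simp add: ad) algebra
  then show ?thesis using dd assms(3) e2 by simp
qed


lemma mon_bd:
  fixes p q r :: real assumes "\<bar>p\<bar> \<le> r" "\<bar>q\<bar> \<le> r"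
  shows "\<bar>p^i * q^j\<bar> \<le> r^(i+j)"
proof -
  have r: "r \<ge> 0" using assms(1) by linarith
  have "\<bar>p\<bar>^i * \<bar>q\<bar>^j \<le> r^i * r^j"
    by (intro mult_mono power_mono assms) (auto simp: r)
  then show ?thesis by (simp add: abs_mult power_abs power_add)
qed

lemma AB_bd:
  fixes A B W :: real assumes "\<bar>A\<bar> \<le> W^2" "\<bar>B\<bar> \<le> W^3" "1 \<le> W" "2*i+3*j \<le> n"
  shows "\<bar>A^i * B^j\<bar> \<le> W^n"
proof -
  have "\<bar>A^i * B^j\<bar> = \<bar>A\<bar>^i * \<bar>B\<bar>^j" by (simp add: abs_mult power_abs)
  also have "\<dots> \<le> (W^2)^i * (W^3)^j"
    by (intro mult_mono power_mono assms) auto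
  also have "\<dots> = W^(2*i+3*j)" by (simp add: power_mult power_add)
  also have "\<dots> \<le> W^n" using assms by (intro power_increasing) auto
  finally show ?thesis .
qed

lemma cubic_bd:
  fixes p q r c0 c1 c2 c3 :: real
  assumes "\<bar>p\<bar> \<le> r" "\<bar>q\<bar> \<le> r"
    "\<bar>c0\<bar> \<le> K0" "\<bar>c1\<bar> \<le> K1" "\<bar>c2\<bar> \<le> K2" "\<bar>c3\<bar> \<le> K3"
  shows "\<bar>c0*p^3 + c1*p^2*q + c2*p*q^2 + c3*q^3\<bar> \<le> (K0+K1+K2+K3)*r^3"
proof -
  have r: "r \<ge> 0" using assms(1) by linarith
  have m: "\<bar>c * (p^i * q^j)\<bar> \<le> K * r^3" if "\<bar>c\<bar> \<le> K" "i + j = 3" for c K i j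
  proof -
    have "\<bar>c * (p^i * q^j)\<bar> = \<bar>c\<bar> * \<bar>p^i * q^j\<bar>" by (simp add: abs_mult)
    also have "\<dots> \<le> K * r^3" using mon_bd[OF assms(1,2), of i j] that r
      by (intro mult_mono) auto
    finally show ?thesis .
  qed
  have t0: "\<bar>c0*p^3\<bar> \<le> K0*r^3" using m[OF assms(3), of 3 0] by simp
  have t1: "\<bar>c1*p^2*q\<bar> \<le> K1*r^3" using m[OF assms(4), of 2 1] by (simp add: mult.assoc)
  have t2: "\<bar>c2*p*q^2\<bar> \<le> K2*r^3" using m[OF assms(5), of 1 2] by (simp add: mult.assoc)
  have t3: "\<bar>c3*q^3\<bar> \<le> K3*r^3" using m[OF assms(6), of 0 3] by simp
  show ?thesis using t0 t1 t2 t3 by (simp add: algebra_simps)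
qed

lemma quartic_bd:
  fixes p q r c0 c1 c2 c3 c4 :: real
  assumes "\<bar>p\<bar> \<le> r" "\<bar>q\<bar> \<le> r"
    "\<bar>c0\<bar> \<le> K0" "\<bar>c1\<bar> \<le> K1" "\<bar>c2\<bar> \<le> K2" "\<bar>c3\<bar> \<le> K3" "\<bar>c4\<bar> \<le> K4"
  shows "\<bar>c0*p^4 + c1*p^3*q + c2*p^2*q^2 + c3*p*q^3 + c4*q^4\<bar> \<le> (K0+K1+K2+K3+K4)*r^4"
proof -
  have r: "r \<ge> 0" using assms(1) by linarith
  have m: "\<bar>c * (p^i * q^j)\<bar> \<le> K * r^4" if "\<bar>c\<bar> \<le> K" "i + j = 4" for c K i j
  proof -
    have "\<bar>c * (p^i * q^j)\<bar> = \<bar>c\<bar> * \<bar>p^i * q^j\<bar>" by (simp add: abs_mult)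
    also have "\<dots> \<le> K * r^4" using mon_bd[OF assms(1,2), of i j] that r
      by (intro mult_mono) auto
    finally show ?thesis .
  qed
  have t0: "\<bar>c0*p^4\<bar> \<le> K0*r^4" using m[OF assms(3), of 4 0] by simp
  have t1: "\<bar>c1*p^3*q\<bar> \<le> K1*r^4" using m[OF assms(4), of 3 1] by (simp add: mult.assoc)
  have t2: "\<bar>c2*p^2*q^2\<bar> \<le> K2*r^4" using m[OF assms(5), of 2 2] by (simp add: mult.assoc)
  have t3: "\<bar>c3*p*q^3\<bar> \<le> K3*r^4" using m[OF assms(6), of 1 3] by (simp add: mult.assoc)
  have t4: "\<bar>c4*q^4\<bar> \<le> K4*r^4" using m[OF assms(7), of 0 4] by simp
  show ?thesis using t0 t1 t2 t3 t4 by (simp add: algebra_simps)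
qed

lemma lin2:
  fixes a b k1 k2 V :: real assumes "\<bar>a\<bar> \<le> V" "\<bar>b\<bar> \<le> V"
  shows "\<bar>k1*a + k2*b\<bar> \<le> (\<bar>k1\<bar>+\<bar>k2\<bar>)*V"
proof -
  have "\<bar>k1*a + k2*b\<bar> \<le> \<bar>k1\<bar>*\<bar>a\<bar> + \<bar>k2\<bar>*\<bar>b\<bar>"
    using abs_triangle_ineq[of "k1*a" "k2*b"] by (simp add: abs_mult)
  also have "\<dots> \<le> \<bar>k1\<bar>*V + \<bar>k2\<bar>*V"
    using assms by (intro add_mono mult_left_mono) auto
  finally show ?thesis by (simp add: algebra_simps)
qed

lemma coeff_bds:
  fixes A B W :: real assumes hA: "\<bar>A\<bar> \<le> W^2" and hB: "\<bar>B\<bar> \<le> W^3" and hW: "1 \<le> W"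
  shows "\<bar>4*(4*A^3+27*B^2)\<bar> \<le> 124*W^10"
    "\<bar>-4*A^2*B\<bar> \<le> 4*W^10"
    "\<bar>4*A*(3*A^3+22*B^2)\<bar> \<le> 100*W^10"
    "\<bar>12*B*(A^3+8*B^2)\<bar> \<le> 108*W^10"
    "\<bar>A^2*B\<bar> \<le> W^10"
    "\<bar>A*(5*A^3+32*B^2)\<bar> \<le> 37*W^10"
    "\<bar>2*B*(13*A^3+96*B^2)\<bar> \<le> 218*W^10"
    "\<bar>-3*A^2*(A^3+8*B^2)\<bar> \<le> 27*W^10"
    "\<bar>16*A\<bar> \<le> 16*W^10"
    "\<bar>-5*A\<bar> \<le> 5*W^10"
    "\<bar>-27*B\<bar> \<le> 27*W^10"
    "1 \<le> W^10"
proof -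
  note b = AB_bd[OF hA hB hW]
  have b30: "\<bar>A^3\<bar> \<le> W^10" using b[of 3 0 10] by simp
  have b02: "\<bar>B^2\<bar> \<le> W^10" using b[of 0 2 10] by simp
  have b21: "\<bar>A^2*B\<bar> \<le> W^10" using b[of 2 1 10] by simp
  have b40: "\<bar>A^4\<bar> \<le> W^10" using b[of 4 0 10] by simp
  have b12: "\<bar>A*B^2\<bar> \<le> W^10" using b[of 1 2 10] by simp
  have b31: "\<bar>A^3*B\<bar> \<le> W^10" using b[of 3 1 10] by simp
  have b03: "\<bar>B^3\<bar> \<le> W^10" using b[of 0 3 10] by simp
  have b50: "\<bar>A^5\<bar> \<le> W^10" using b[of 5 0 10] by simp
  have b22: "\<bar>A^2*B^2\<bar> \<le> W^10" using b[of 2 2 10] by simp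
  have b10: "\<bar>A\<bar> \<le> W^10" using b[of 1 0 10] by simp
  have b01: "\<bar>B\<bar> \<le> W^10" using b[of 0 1 10] by simp
  have b00: "1 \<le> W^10" using b[of 0 0 10] by simp
  have e1: "4*(4*A^3+27*B^2) = 16*A^3 + 108*B^2" by (simp add: algebra_simps)
  have e3: "4*A*(3*A^3+22*B^2) = 12*A^4 + 88*(A*B^2)" by algebra
  have e4: "12*B*(A^3+8*B^2) = 12*(A^3*B) + 96*B^3" by algebra
  have e6: "A*(5*A^3+32*B^2) = 5*A^4 + 32*(A*B^2)" by algebra
  have e7: "2*B*(13*A^3+96*B^2) = 26*(A^3*B) + 192*B^3" by algebra
  have e8: "-3*A^2*(A^3+8*B^2) = -3*A^5 - 24*(A^2*B^2)" by algebra
  have B2: "0 \<le> B^2" by simp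
  show "\<bar>4*(4*A^3+27*B^2)\<bar> \<le> 124*W^10" unfolding e1 using lin2[OF b30 b02, of 16 108] by simp
  show "\<bar>-4*A^2*B\<bar> \<le> 4*W^10" using b21 by (simp add: abs_mult)
  show "\<bar>4*A*(3*A^3+22*B^2)\<bar> \<le> 100*W^10" unfolding e3 using lin2[OF b40 b12, of 12 88] by simp
  show "\<bar>12*B*(A^3+8*B^2)\<bar> \<le> 108*W^10" unfolding e4 using lin2[OF b31 b03, of 12 96] by simp
  show "\<bar>A^2*B\<bar> \<le> W^10" by (rule b21)
  show "\<bar>A*(5*A^3+32*B^2)\<bar> \<le> 37*W^10" unfolding e6 using lin2[OF b40 b12, of 5 32] by simp
  show "\<bar>2*B*(13*A^3+96*B^2)\<bar> \<le> 218*W^10" unfolding e7 using lin2[OF b31 b03, of 26 192] by simp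
  show "\<bar>-3*A^2*(A^3+8*B^2)\<bar> \<le> 27*W^10" unfolding e8 using lin2[OF b50 b22, of "-3" "-24"] by simp
  show "\<bar>16*A\<bar> \<le> 16*W^10" using b10 by simp
  show "\<bar>-5*A\<bar> \<le> 5*W^10" using b10 by simp
  show "\<bar>-27*B\<bar> \<le> 27*W^10" using b01 by simp
  show "1 \<le> W^10" by (rule b00)
qed


lemma id1_int: fixes A B X Z :: int
  shows "(12*X^2*Z + 16*A*Z^3) * (X^4 - 2*A*X^2*Z^2 - 8*B*X*Z^3 + A^2*Z^4)
   - (3*X^3 - 5*A*X*Z^2 - 27*B*Z^3) * (4*Z*(X^3 + A*X*Z^2 + B*Z^3)) = 4*(4*A^3+27*B^2)*Z^7"
  by algebra
lemma id2_int: fixes A B X Z :: int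
  shows "(4*(4*A^3+27*B^2)*X^3 - 4*A^2*B*X^2*Z + 4*A*(3*A^3+22*B^2)*X*Z^2 + 12*B*(A^3+8*B^2)*Z^3) * (X^4 - 2*A*X^2*Z^2 - 8*B*X*Z^3 + A^2*Z^4)
   + (A^2*B*X^3 + A*(5*A^3+32*B^2)*X^2*Z + 2*B*(13*A^3+96*B^2)*X*Z^2 - 3*A^2*(A^3+8*B^2)*Z^3) * (4*Z*(X^3 + A*X*Z^2 + B*Z^3)) = 4*(4*A^3+27*B^2)*X^7"
  by algebra

lemma id1_real: fixes A B X Z :: real
  shows "(0*X^3 + 12*X^2*Z + 0*X*Z^2 + (16*A)*Z^3) * (X^4 - 2*A*X^2*Z^2 - 8*B*X*Z^3 + A^2*Z^4)
   - (3*X^3 + 0*X^2*Z + (-5*A)*X*Z^2 + (-27*B)*Z^3) * (4*Z*(X^3 + A*X*Z^2 + B*Z^3)) = 4*(4*A^3+27*B^2)*Z^7"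
  by algebra
lemma id2_real: fixes A B X Z :: real
  shows "((4*(4*A^3+27*B^2))*X^3 + (-4*A^2*B)*X^2*Z + (4*A*(3*A^3+22*B^2))*X*Z^2 + (12*B*(A^3+8*B^2))*Z^3) * (X^4 - 2*A*X^2*Z^2 - 8*B*X*Z^3 + A^2*Z^4)
   + ((A^2*B)*X^3 + (A*(5*A^3+32*B^2))*X^2*Z + (2*B*(13*A^3+96*B^2))*X*Z^2 + (-3*A^2*(A^3+8*B^2))*Z^3) * (4*Z*(X^3 + A*X*Z^2 + B*Z^3)) = 4*(4*A^3+27*B^2)*X^7"
  by algebra

lemma arch_step:
  fixes f g F G D r :: real
  assumes "f * F + g * G = D" "\<bar>f\<bar> \<le> K1" "\<bar>g\<bar> \<le> K2"
  shows "\<bar>D\<bar> \<le> (K1 + K2) * max \<bar>F\<bar> \<bar>G\<bar>"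
proof -
  have "\<bar>D\<bar> \<le> \<bar>f\<bar> * \<bar>F\<bar> + \<bar>g\<bar> * \<bar>G\<bar>"
    using abs_triangle_ineq[of "f*F" "g*G"] assms(1) by (simp add: abs_mult)
  also have "\<dots> \<le> K1 * max \<bar>F\<bar> \<bar>G\<bar> + K2 * max \<bar>F\<bar> \<bar>G\<bar>"
    using assms(2,3) by (intro add_mono mult_mono) auto
  finally show ?thesis by (simp add: algebra_simps)
qed

lemma arch_step_minus:
  fixes f g F G D r :: real
  assumes "f * F - g * G = D" "\<bar>f\<bar> \<le> K1" "\<bar>g\<bar> \<le> K2"
  shows "\<bar>D\<bar> \<le> (K1 + K2) * max \<bar>F\<bar> \<bar>G\<bar>"
  using arch_step[of f F "-g" G D K1 K2] assms by simp


lemma lnmono: fixes x y :: real shows "0 < x \<Longrightarrow> x \<le> y \<Longrightarrow> ln x \<le> ln y"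
  by simp

lemma dbl_bounds:
  fixes A B :: int and W :: real
  assumes hA: "real_of_int \<bar>A\<bar> \<le> W^2" and hB: "real_of_int \<bar>B\<bar> \<le> W^3" and hW: "1 \<le> W"
    and hD: "4*A^3+27*B^2 \<noteq> 0" and S: "on_curve A B S"
  shows "pt_h (ec_add A S S) \<le> 4 * pt_h S + ln (12 * W^4)"
    and "4 * pt_h S \<le> pt_h (ec_add A S S) + ln (1000 * W^10)"
proof -
  have W4: "1 \<le> W^4" and W10: "1 \<le> W^10" using hW by simp_all
  have lnU: "0 \<le> ln (12 * W^4)" using W4 by simp
  have lnL: "0 \<le> ln (1000 * W^10)" using W10 by simp
  have "pt_h (ec_add A S S) \<le> 4 * pt_h S + ln (12 * W^4) \<and>
        4 * pt_h S \<le> pt_h (ec_add A S S) + ln (1000 * W^10)"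
  proof (cases S)
    case None
    then show ?thesis using lnU lnL by (simp add: ec_add_def pt_h_def)
  next
    case (Some pp)
    then obtain x y where Sxy: "S = Some (x, y)" by (cases pp) auto
    have cv: "y^2 = x^3 + of_int A * x + of_int B" using S Sxy by (simp add: on_curve_def)
    obtain a d where qd: "quotient_of x = (a, d)" by (cases "quotient_of x")
    have dpos: "d > 0" using quotient_of_denom_pos[OF qd] .
    have cop: "coprime a d" using quotient_of_coprime[OF qd] .
    have xad: "x = of_int a / of_int d" using quotient_of_div[OF qd] .
    define m where "m = max \<bar>a\<bar> d"
    define p where "p = real_of_int a"
    define q where "q = real_of_int d"
    define r where "r = real_of_int m"
    have r1: "1 \<le> r" using dpos by (simp add: r_def m_def)
    have pr: "\<bar>p\<bar> \<le> r" and qr: "\<bar>q\<bar> \<le> r" using dpos by (auto simp: p_def q_def r_def m_def)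
    have hS: "pt_h S = ln r" using Sxy weil_h_quot[OF qd] by (simp add: pt_h_def r_def m_def)
    have hSnn: "0 \<le> ln r" using r1 by simp
    have rA: "\<bar>real_of_int A\<bar> \<le> W^2" and rB: "\<bar>real_of_int B\<bar> \<le> W^3" using hA hB by simp_all
    have dd: "(of_int d :: rat) \<noteq> 0" using dpos by simp
    have ad: "(of_int a :: rat) = x * of_int d" using xad dd by simp
    have e: "(of_int (a^3 + A*a*d^2 + B*d^3) :: rat) = (of_int d)^3 * (x^3 + of_int A * x + of_int B)"
      by (simp add: ad) algebra
    show ?thesis
    proof (cases "y = 0")
      case True
      have two: "ec_add A S S = None" using Sxy True by (simp add: ec_add_def)
      have f0: "x^3 + of_int A * x + of_int B = 0" using cv True by simp
      have z: "a^3 + A*a*d^2 + B*d^3 = 0"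
      proof -
        have "(of_int (a^3 + A*a*d^2 + B*d^3) :: rat) = 0" using e f0 by simp
        then show ?thesis by (simp only: of_int_eq_0_iff)
      qed
      have "d dvd a^3"
      proof -
        have "a^3 = d * (- (A*a*d) - B*d^2)" using z by (simp add: algebra_simps power2_eq_square power3_eq_cube)
        then show ?thesis by (metis dvd_triv_left)
      qed
      moreover have "coprime (a^3) d" using cop by simp
      ultimately have "is_unit d" by (meson coprime_common_divisor dvd_refl)
      then have d1: "d = 1" using dpos by auto
      have z1: "p^3 = - (real_of_int A * p + real_of_int B)"
      proof -
        have "real_of_int (a^3 + A*a*d^2 + B*d^3) = 0" using z by simp
        then show ?thesis using d1 by (simp add: p_def algebra_simps)
      qed
      have pb: "\<bar>p\<bar> \<le> 2 * W"
      proof (rule ccontr)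
        assume "\<not> \<bar>p\<bar> \<le> 2 * W"
        then have big: "2 * W < \<bar>p\<bar>" by simp
        have Wp: "0 < W" using hW by simp
        have "\<bar>p\<bar>^3 = \<bar>real_of_int A * p + real_of_int B\<bar>" using z1 by (simp add: power_abs[symmetric])
        also have "\<dots> \<le> \<bar>real_of_int A\<bar> * \<bar>p\<bar> + \<bar>real_of_int B\<bar>"
          using abs_triangle_ineq by (metis abs_mult)
        also have "\<dots> \<le> W^2 * \<bar>p\<bar> + W^3"
          using rA rB by (intro add_mono mult_right_mono) auto
        finally have c1: "\<bar>p\<bar>^3 \<le> W^2 * \<bar>p\<bar> + W^3" .
        have "(2*W)^2 < \<bar>p\<bar>^2" using big Wp by (intro power_strict_mono) auto
        then have "4 * W^2 * \<bar>p\<bar> < \<bar>p\<bar>^2 * \<bar>p\<bar>" using big Wp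
          by (intro mult_strict_right_mono) (auto simp: power_mult_distrib)
        moreover have "(2*W)^3 < \<bar>p\<bar>^3" using big Wp by (intro power_strict_mono) auto
        ultimately have "4 * (W^2 * \<bar>p\<bar>) + 8 * W^3 < 2 * \<bar>p\<bar>^3"
          by (simp add: power_mult_distrib power2_eq_square power3_eq_cube algebra_simps)
        moreover have "0 \<le> W^2 * \<bar>p\<bar>" "0 \<le> W^3" using Wp by auto
        ultimately show False using c1 by linarith
      qed
      have rle: "r \<le> 2 * W" using pb d1 hW by (simp add: r_def m_def p_def)
      have "4 * ln r = ln (r^4)" by (simp add: ln_realpow)
      also have "\<dots> \<le> ln ((2*W)^4)"
      proof -
        have "r^4 \<le> (2*W)^4" using r1 rle by (intro power_mono) auto
        then show ?thesis using r1 by (intro lnmono) auto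
      qed
      also have "\<dots> \<le> ln (1000 * W^10)"
      proof -
        have "(2*W)^4 = 16 * W^4" by (simp add: power_mult_distrib)
        also have "\<dots> \<le> 1000 * W^10"
        proof -
          have "W^4 \<le> W^10" using hW by (intro power_increasing) auto
          then show ?thesis using W4 by linarith
        qed
        finally show ?thesis using hW by simp
      qed
      finally show ?thesis using two hS hSnn lnU by (simp add: pt_h_def)
    next
      case False
      have fne: "x^3 + of_int A * x + of_int B \<noteq> 0" using cv False by (metis zero_eq_power2)
      define F where "F = a^4 - 2*A*a^2*d^2 - 8*B*a*d^3 + A^2*d^4"
      define G where "G = 4*d*(a^3 + A*a*d^2 + B*d^3)"
      have Gne: "G \<noteq> 0"
      proof -
        have "(of_int (a^3 + A*a*d^2 + B*d^3) :: rat) \<noteq> 0" using e dd fne by simp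
        then have "a^3 + A*a*d^2 + B*d^3 \<noteq> 0" by (metis of_int_0)
        then show ?thesis using dpos by (simp add: G_def)
      qed
      obtain y3 where two: "ec_add A S S = Some (of_int F / of_int G, y3)"
        using Sxy False dbl_x[OF cv False] dbl_x_frac[OF xad _ fne] dpos
        by (simp add: ec_dbl_some Let_def F_def G_def)
      have h2: "pt_h (ec_add A S S) = weil_h (of_int F / of_int G)" using two by (simp add: pt_h_def)
      define Mx where "Mx = real_of_int (max \<bar>F\<bar> \<bar>G\<bar>)"
      have Mxpos: "Mx > 0" using Gne by (simp add: Mx_def)
      have Mxe: "Mx = max \<bar>real_of_int F\<bar> \<bar>real_of_int G\<bar>" by (simp add: Mx_def)
      have rF': "real_of_int F = p^4 - 2*real_of_int A*p^2*q^2 - 8*real_of_int B*p*q^3 + (real_of_int A)^2*q^4"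
        by (simp add: F_def p_def q_def)
      have rG': "real_of_int G = 4*q*(p^3 + real_of_int A*p*q^2 + real_of_int B*q^3)"
        by (simp add: G_def p_def q_def)
      have rF: "real_of_int F = 1*p^4 + 0*p^3*q + (-2*real_of_int A)*p^2*q^2 + (-8*real_of_int B)*p*q^3 + (real_of_int A)^2*q^4"
        unfolding rF' by algebra
      have rG: "real_of_int G = 0*p^4 + 4*p^3*q + 0*p^2*q^2 + (4*real_of_int A)*p*q^3 + (4*real_of_int B)*q^4"
        unfolding rG' by algebra
      have W24: "W^2 \<le> W^4" and W34: "W^3 \<le> W^4" using hW by (simp_all add: power_increasing)
      have A2: "\<bar>(real_of_int A)^2\<bar> \<le> W^4"
      proof -
        have "\<bar>real_of_int A\<bar>^2 \<le> (W^2)^2" using rA by (intro power_mono) auto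
        then show ?thesis by (simp add: power_abs[symmetric] power_mult[symmetric])
      qed
      have Fb: "\<bar>real_of_int F\<bar> \<le> (W^4 + 0 + 2*W^4 + 8*W^4 + W^4) * r^4"
        unfolding rF using W4 rA rB W24 W34 A2
        by (intro quartic_bd[OF pr qr]) (auto simp: abs_mult)
      have Gb: "\<bar>real_of_int G\<bar> \<le> (0 + 4*W^4 + 0 + 4*W^4 + 4*W^4) * r^4"
        unfolding rG using W4 rA rB W24 W34
        by (intro quartic_bd[OF pr qr]) (auto simp: abs_mult)
      have MxU: "Mx \<le> 12 * W^4 * r^4" using Fb Gb by (simp add: Mxe)
      have upper: "weil_h (of_int F / of_int G) \<le> ln (12 * W^4) + 4 * ln r"
      proof -
        have "weil_h (of_int F / of_int G) \<le> ln Mx" using weil_h_frac_le[OF Gne] by (simp add: Mx_def)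
        also have "\<dots> \<le> ln (12 * W^4 * r^4)" using MxU Mxpos by simp
        also have "\<dots> = ln (12 * W^4) + 4 * ln r" using r1 W4 hW
          by (simp add: ln_mult ln_realpow)
        finally show ?thesis .
      qed
      define \<Delta> where "\<Delta> = 4*A^3+27*B^2"
      define g where "g = gcd F G"
      have gF: "g dvd F" and gG: "g dvd G" by (simp_all add: g_def)
      have g1: "g dvd 4*\<Delta>*d^7"
        using id1_int[of a d A B] gF gG unfolding \<Delta>_def F_def G_def
        by (metis dvd_diff dvd_mult)
      have g2: "g dvd 4*\<Delta>*a^7"
        using id2_int[of A B a d] gF gG unfolding \<Delta>_def F_def G_def
        by (metis dvd_add dvd_mult)
      have "gcd (4*\<Delta>*d^7) (4*\<Delta>*a^7) = \<bar>4*\<Delta>\<bar> * gcd (d^7) (a^7)"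
        by (rule gcd_mult_distrib_int[symmetric])
      also have "gcd (d^7) (a^7) = 1" using cop by (simp add: coprime_commute)
      finally have "g dvd \<bar>4*\<Delta>\<bar>" using g1 g2 by (metis gcd_greatest mult.right_neutral)
      then have "g dvd 4*\<Delta>" by simp
      moreover have hD4: "4*\<Delta> \<noteq> 0" using hD by (simp add: \<Delta>_def)
      ultimately have "\<bar>g\<bar> \<le> \<bar>4*\<Delta>\<bar>" using dvd_imp_le_int by blast
      then have gle: "g \<le> \<bar>4*\<Delta>\<bar>" by simp
      have gpos: "g > 0" using Gne by (simp add: g_def)
      have hF: "weil_h (of_int F / of_int G) = ln (Mx / real_of_int g)"
        using weil_h_frac[OF Gne] by (simp add: Mx_def g_def)
      define DD where "DD = real_of_int \<bar>4*\<Delta>\<bar>"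
      have DDpos: "DD > 0" using hD4 unfolding DD_def by simp
      note cb = coeff_bds[OF rA rB hW]
      have c0: "\<bar>0::real\<bar> \<le> 0" by simp
      have c12: "\<bar>12::real\<bar> \<le> 12*W^10" using W10 by simp
      have c3: "\<bar>3::real\<bar> \<le> 3*W^10" using W10 by simp
      have rD: "real_of_int (4*\<Delta>) = 4*(4*real_of_int A^3+27*real_of_int B^2)"
        by (simp add: \<Delta>_def)
      have a1: "(0*p^3 + 12*p^2*q + 0*p*q^2 + (16*real_of_int A)*q^3) * real_of_int F
           - (3*p^3 + 0*p^2*q + (-5*real_of_int A)*p*q^2 + (-27*real_of_int B)*q^3) * real_of_int G = real_of_int (4*\<Delta>) * q^7"
        unfolding rF' rG' rD by (rule id1_real)
      have a2: "((4*(4*real_of_int A^3+27*real_of_int B^2))*p^3 + (-4*real_of_int A^2*real_of_int B)*p^2*q + (4*real_of_int A*(3*real_of_int A^3+22*real_of_int B^2))*p*q^2 + (12*real_of_int B*(real_of_int A^3+8*real_of_int B^2))*q^3) * real_of_int F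
           + ((real_of_int A^2*real_of_int B)*p^3 + (real_of_int A*(5*real_of_int A^3+32*real_of_int B^2))*p^2*q + (2*real_of_int B*(13*real_of_int A^3+96*real_of_int B^2))*p*q^2 + (-3*real_of_int A^2*(real_of_int A^3+8*real_of_int B^2))*q^3) * real_of_int G = real_of_int (4*\<Delta>) * p^7"
        unfolding rF' rG' rD by (rule id2_real)
      have f1b: "\<bar>0*p^3 + 12*p^2*q + 0*p*q^2 + (16*real_of_int A)*q^3\<bar> \<le> (0 + 12*W^10 + 0 + 16*W^10) * r^3"
        by (rule cubic_bd[OF pr qr c0 c12 c0 cb(9)])
      have g1b: "\<bar>3*p^3 + 0*p^2*q + (-5*real_of_int A)*p*q^2 + (-27*real_of_int B)*q^3\<bar> \<le> (3*W^10 + 0 + 5*W^10 + 27*W^10) * r^3"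
        by (rule cubic_bd[OF pr qr c3 c0 cb(10) cb(11)])
      have f2b: "\<bar>(4*(4*real_of_int A^3+27*real_of_int B^2))*p^3 + (-4*real_of_int A^2*real_of_int B)*p^2*q + (4*real_of_int A*(3*real_of_int A^3+22*real_of_int B^2))*p*q^2 + (12*real_of_int B*(real_of_int A^3+8*real_of_int B^2))*q^3\<bar>
         \<le> (124*W^10 + 4*W^10 + 100*W^10 + 108*W^10) * r^3"
        by (rule cubic_bd[OF pr qr cb(1) cb(2) cb(3) cb(4)])
      have g2b: "\<bar>(real_of_int A^2*real_of_int B)*p^3 + (real_of_int A*(5*real_of_int A^3+32*real_of_int B^2))*p^2*q + (2*real_of_int B*(13*real_of_int A^3+96*real_of_int B^2))*p*q^2 + (-3*real_of_int A^2*(real_of_int A^3+8*real_of_int B^2))*q^3\<bar>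
         \<le> (W^10 + 37*W^10 + 218*W^10 + 27*W^10) * r^3"
        by (rule cubic_bd[OF pr qr cb(5) cb(6) cb(7) cb(8)])
      have L1: "\<bar>real_of_int (4*\<Delta>) * q^7\<bar> \<le> ((0 + 12*W^10 + 0 + 16*W^10) * r^3 + (3*W^10 + 0 + 5*W^10 + 27*W^10) * r^3) * Mx"
        unfolding Mxe by (rule arch_step_minus[OF a1 f1b g1b])
      have L2: "\<bar>real_of_int (4*\<Delta>) * p^7\<bar> \<le> ((124*W^10 + 4*W^10 + 100*W^10 + 108*W^10) * r^3 + (W^10 + 37*W^10 + 218*W^10 + 27*W^10) * r^3) * Mx"
        unfolding Mxe by (rule arch_step[OF a2 f2b g2b])
      have r3pos: "r^3 > 0" using r1 by simp
      have key: "DD * r^7 \<le> 1000 * W^10 * r^3 * Mx"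
      proof -
        have T: "0 \<le> W^10 * r^3 * Mx" using Mxpos r3pos W10 by simp
        have K1: "((0 + 12*W^10 + 0 + 16*W^10) * r^3 + (3*W^10 + 0 + 5*W^10 + 27*W^10) * r^3) * Mx \<le> 1000 * W^10 * r^3 * Mx"
        proof -
          have "((0 + 12*W^10 + 0 + 16*W^10) * r^3 + (3*W^10 + 0 + 5*W^10 + 27*W^10) * r^3) * Mx = 63 * (W^10 * r^3 * Mx)" by algebra
          then show ?thesis using T by linarith
        qed
        have K2: "((124*W^10 + 4*W^10 + 100*W^10 + 108*W^10) * r^3 + (W^10 + 37*W^10 + 218*W^10 + 27*W^10) * r^3) * Mx \<le> 1000 * W^10 * r^3 * Mx"
        proof -
          have "((124*W^10 + 4*W^10 + 100*W^10 + 108*W^10) * r^3 + (W^10 + 37*W^10 + 218*W^10 + 27*W^10) * r^3) * Mx = 619 * (W^10 * r^3 * Mx)" by algebra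
          then show ?thesis using T by linarith
        qed
        have "r = \<bar>p\<bar> \<or> r = q" using dpos by (auto simp: r_def m_def p_def q_def max_def)
        then show ?thesis
        proof
          assume "r = \<bar>p\<bar>"
          then have "DD * r^7 = \<bar>real_of_int (4*\<Delta>) * p^7\<bar>" by (simp add: DD_def abs_mult power_abs)
          then show ?thesis using L2 K2 by linarith
        next
          assume "r = q"
          then have "DD * r^7 = \<bar>real_of_int (4*\<Delta>) * q^7\<bar>" using dpos by (simp add: DD_def abs_mult q_def)
          then show ?thesis using L1 K1 by linarith
        qed
      qed
      have key2: "r^4 / (1000 * W^10) \<le> Mx / real_of_int g"
      proof -
        have "DD * r^4 \<le> 1000 * W^10 * Mx"
        proof -
          have "DD * r^4 * r^3 \<le> 1000 * W^10 * Mx * r^3" using key by (simp add: algebra_simps power_add[symmetric])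
          then show ?thesis using r3pos by simp
        qed
        then have h0: "r^4 * DD \<le> Mx * (1000*W^10)" by (simp add: algebra_simps)
        have W10p: "0 < 1000*W^10" using hW by simp
        from h0 have "r^4 * DD / (1000*W^10) \<le> Mx" by (simp add: pos_divide_le_eq[OF W10p])
        then have "r^4 / (1000*W^10) * DD \<le> Mx" by simp
        then have "r^4 / (1000 * W^10) \<le> Mx / DD" by (simp add: pos_le_divide_eq[OF DDpos])
        also have "\<dots> \<le> Mx / real_of_int g" using gle gpos Mxpos unfolding DD_def
          by (intro divide_left_mono) auto
        finally show ?thesis .
      qed
      have lower: "4 * ln r \<le> weil_h (of_int F / of_int G) + ln (1000 * W^10)"
      proof -
        have "4 * ln r - ln (1000 * W^10) = ln (r^4 / (1000 * W^10))"
          using r1 W10 hW by (simp add: ln_div ln_realpow)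
        also have "\<dots> \<le> ln (Mx / real_of_int g)" using key2 r1 hW by (intro lnmono) auto
        finally show ?thesis using hF by simp
      qed
      show ?thesis using upper lower h2 hS by simp
    qed
  qed
  then show "pt_h (ec_add A S S) \<le> 4 * pt_h S + ln (12 * W^4)"
    and "4 * pt_h S \<le> pt_h (ec_add A S S) + ln (1000 * W^10)" by auto
qed


lemma geo4: "(\<lambda>n. c / 4 ^ Suc n) sums (c / 3 :: real)"
proof -
  have "(\<lambda>n. (1/4::real) ^ n) sums (1 / (1 - 1/4))" by (rule geometric_sums) simp
  then have "(\<lambda>n. c/4 * (1/4::real) ^ n) sums (c/4 * (1 / (1 - 1/4)))" by (rule sums_mult)
  moreover have "(\<lambda>n. c/4 * (1/4::real) ^ n) = (\<lambda>n. c / 4 ^ Suc n)"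
    by (simp add: power_one_over divide_simps)
  ultimately show ?thesis by simp
qed

lemma canh_bounds:
  fixes A B :: int and Cu Cl :: real
  assumes up: "\<And>S. on_curve A B S \<Longrightarrow> pt_h (ec_add A S S) \<le> 4 * pt_h S + Cu"
      and lo: "\<And>S. on_curve A B S \<Longrightarrow> 4 * pt_h S \<le> pt_h (ec_add A S S) + Cl"
      and R: "on_curve A B R"
  shows "can_h A R \<le> pt_h R + Cu/3 \<and> pt_h R - Cl/3 \<le> can_h A R"
proof -
  define T where "T n = ((\<lambda>R. ec_add A R R) ^^ n) R" for n
  define u where "u n = pt_h (T n) / 4^n" for n
  define df where "df n = u (Suc n) - u n" for n
  have Ts: "T (Suc n) = ec_add A (T n) (T n)" for n by (simp add: T_def)
  have Tc: "on_curve A B (T n)" for n unfolding T_def by (rule on_curve_iter[OF R])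
  have dfe: "df n = (pt_h (T (Suc n)) - 4 * pt_h (T n)) / 4 ^ Suc n" for n
    by (simp add: df_def u_def divide_simps)
  have dfu: "df n \<le> Cu / 4 ^ Suc n" for n
    unfolding dfe using up[OF Tc[of n]] Ts[of n] by (intro divide_right_mono) auto
  have dfl: "- Cl / 4 ^ Suc n \<le> df n" for n
    unfolding dfe using lo[OF Tc[of n]] Ts[of n] by (intro divide_right_mono) auto
  have sCu: "summable (\<lambda>n. Cu / 4 ^ Suc n)" using geo4 sums_summable by blast
  have sCl: "summable (\<lambda>n. - Cl / 4 ^ Suc n)" using geo4[of "-Cl"] sums_summable by blast
  have sabs: "summable (\<lambda>n. \<bar>Cu\<bar> / 4 ^ Suc n + \<bar>Cl\<bar> / 4 ^ Suc n)"
    using geo4[of "\<bar>Cu\<bar>"] geo4[of "\<bar>Cl\<bar>"] sums_summable summable_add by blast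
  have sdf: "summable df"
  proof (rule summable_comparison_test[OF _ sabs])
    show "\<exists>N. \<forall>n\<ge>N. norm (df n) \<le> \<bar>Cu\<bar> / 4 ^ Suc n + \<bar>Cl\<bar> / 4 ^ Suc n"
    proof (intro exI allI impI)
      fix n :: nat
      define v where "v = (4::real) ^ Suc n"
      have vpos: "v > 0" by (simp add: v_def)
      have u1: "df n \<le> Cu / v" using dfu[of n] by (simp only: v_def)
      have l1: "- Cl / v \<le> df n" using dfl[of n] by (simp only: v_def)
      have a: "Cu / v \<le> \<bar>Cu\<bar> / v" using vpos by (intro divide_right_mono) auto
      have b: "- \<bar>Cl\<bar> / v \<le> - Cl / v" using vpos by (intro divide_right_mono) auto
      have c: "0 \<le> \<bar>Cu\<bar> / v" "0 \<le> \<bar>Cl\<bar> / v" using vpos by auto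
      have e: "- \<bar>Cl\<bar> / v = - (\<bar>Cl\<bar> / v)" by simp
      have "df n \<le> \<bar>Cu\<bar> / v + \<bar>Cl\<bar> / v" using u1 a c by linarith
      moreover have "- df n \<le> \<bar>Cu\<bar> / v + \<bar>Cl\<bar> / v" using l1 b c e by linarith
      ultimately show "norm (df n) \<le> \<bar>Cu\<bar> / 4 ^ Suc n + \<bar>Cl\<bar> / 4 ^ Suc n"
        unfolding v_def real_norm_def abs_le_iff by blast
    qed
  qed
  have tel: "(\<Sum>k<n. df k) = u n - u 0" for n
    unfolding df_def by (rule sum_lessThan_telescope)
  have "(\<lambda>n. \<Sum>k<n. df k) \<longlonglongrightarrow> suminf df" using sdf summable_LIMSEQ by blast
  then have "(\<lambda>n. u 0 + (\<Sum>k<n. df k)) \<longlonglongrightarrow> u 0 + suminf df" by (intro tendsto_add) auto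
  then have "u \<longlonglongrightarrow> u 0 + suminf df" using tel by simp
  then have lu: "lim u = u 0 + suminf df" by (rule limI)
  have ue: "u = (\<lambda>n. pt_h (((\<lambda>R. ec_add A R R) ^^ n) R) / 4 ^ n)"
    by (rule ext) (simp add: u_def T_def)
  have ch: "can_h A R = lim u" unfolding can_h_def ue ..
  have u0: "u 0 = pt_h R" by (simp add: u_def T_def)
  have "suminf df \<le> (\<Sum>n. Cu / 4 ^ Suc n)" by (rule suminf_le[OF dfu sdf sCu])
  also have "\<dots> = Cu / 3" using geo4 sums_unique by metis
  finally have s1: "suminf df \<le> Cu / 3" .
  have "(\<Sum>n. - Cl / 4 ^ Suc n) \<le> suminf df" by (rule suminf_le[OF dfl sCl sdf])
  moreover have "(\<Sum>n. - Cl / 4 ^ Suc n) = - Cl / 3" using geo4[of "-Cl"] sums_unique by metis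
  ultimately have s2: "- Cl / 3 \<le> suminf df" by simp
  show ?thesis using s1 s2 ch lu u0 by simp
qed


lemma lnmono': fixes x y :: real shows "0 < x \<Longrightarrow> x \<le> y \<Longrightarrow> ln x \<le> ln y"
  by simp


lemma rat_sq_int:
  fixes q :: rat assumes "q^2 = of_int k" shows "\<exists>t::int. q = of_int t"
proof -
  obtain n e where qd: "quotient_of q = (n, e)" by (cases "quotient_of q")
  have epos: "e > 0" using quotient_of_denom_pos[OF qd] .
  have cop: "coprime n e" using quotient_of_coprime[OF qd] .
  have qe: "q = of_int n / of_int e" using quotient_of_div[OF qd] .
  have "(of_int n / of_int e :: rat)^2 = of_int k" using assms qe by simp
  then have "(of_int (n^2) :: rat) = of_int (k * e^2)" using epos
    by (simp add: power_divide field_simps)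
  then have "n^2 = k * e^2" by (simp only: of_int_eq_iff)
  then have "e^2 dvd n^2" by simp
  moreover have "coprime (n^2) (e^2)" using cop by simp
  ultimately have "is_unit (e^2)" by (meson coprime_common_divisor dvd_refl)
  then have "e^2 = 1" by simp
  then have "e = 1" using epos power2_eq_1_iff[of e] by auto
  then show ?thesis using qe by auto
qed

lemma sum_alg:
  fixes xP xQ yP yQ l s x1 x2 A B T x3 :: rat
  assumes "xP * s = x1" "xQ * s = x2" "l * (xQ - xP) = yQ - yP"
    "yP^2 = xP^3 + A*xP + B" "yQ^2 = xQ^3 + A*xQ + B" "T = s^3 * yP * yQ" "x3 = l^2 - xP - xQ"
  shows "x3 * (s * (x2 - x1)^2) = (x1+x2)*x1*x2 + A*s^2*(x1+x2) + 2*B*s^3 - 2*T"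
proof -
  have id: "(l^2 - xP - xQ) * (s * (xQ*s - xP*s)^2) - ((xP*s+xQ*s)*(xP*s)*(xQ*s) + A*s^2*(xP*s+xQ*s) + 2*B*s^3 - 2*(s^3 * yP * yQ))
     = s^3*((l*(xQ-xP))^2 - (yQ-yP)^2) + s^3*((yQ^2 - (xQ^3 + A*xQ + B)) + (yP^2 - (xP^3 + A*xP + B)))"
    by algebra
  have z: "s^3*((l*(xQ-xP))^2 - (yQ-yP)^2) + s^3*((yQ^2 - (xQ^3 + A*xQ + B)) + (yP^2 - (xP^3 + A*xP + B))) = 0"
    using assms(3,4,5) by simp
  show ?thesis using id z assms(1,2,6,7) by simp
qed

lemma sum_bound:
  fixes A B x1 x2 s :: int and yP yQ :: rat and W :: real
  assumes cP: "on_curve A B (Some (of_int x1 / of_int s, yP))"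
    and cQ: "on_curve A B (Some (of_int x2 / of_int s, yQ))"
    and spos: "s > 0" and hA: "real_of_int \<bar>A\<bar> \<le> W^2" and hB: "real_of_int \<bar>B\<bar> \<le> W^3"
    and hWs: "W * real_of_int s \<le> real_of_int x1" and hW: "1 \<le> W" and x12: "x1 < x2"
  shows "pt_h (ec_add A (Some (of_int x1 / of_int s, yP)) (Some (of_int x2 / of_int s, yQ)))
          \<le> ln 12 + ln (real_of_int x1) + 2 * ln (real_of_int x2)"
proof -
  define xP where "xP = (of_int x1 / of_int s :: rat)"
  define xQ where "xQ = (of_int x2 / of_int s :: rat)"
  have sne: "(of_int s :: rat) \<noteq> 0" using spos by simp
  have xPs: "xP * of_int s = of_int x1" using sne by (simp add: xP_def)
  have xQs: "xQ * of_int s = of_int x2" using sne by (simp add: xQ_def)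
  have xne: "xP \<noteq> xQ" using x12 sne by (simp add: xP_def xQ_def)
  have eP: "yP^2 = xP^3 + of_int A * xP + of_int B" using cP by (simp add: on_curve_def xP_def)
  have eQ: "yQ^2 = xQ^3 + of_int A * xQ + of_int B" using cQ by (simp add: on_curve_def xQ_def)
  define N1 where "N1 = x1^3 + A*x1*s^2 + B*s^3"
  define N2 where "N2 = x2^3 + A*x2*s^2 + B*s^3"
  have N1e: "(of_int s)^3 * yP^2 = (of_int N1 :: rat)"
    unfolding N1_def by (simp only: of_int_add of_int_mult of_int_power eP xPs[symmetric]) algebra
  have N2e: "(of_int s)^3 * yQ^2 = (of_int N2 :: rat)"
    unfolding N2_def by (simp only: of_int_add of_int_mult of_int_power eQ xQs[symmetric]) algebra
  define t where "t = (of_int s)^3 * yP * yQ"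
  have "t^2 = of_int (N1 * N2)"
  proof -
    have "t^2 = ((of_int s)^3 * yP^2) * ((of_int s)^3 * yQ^2)" by (simp add: t_def algebra_simps power2_eq_square)
    then show ?thesis using N1e N2e by simp
  qed
  then obtain T where tT: "t = of_int T" using rat_sq_int by blast
  have T2: "T^2 = N1 * N2"
  proof -
    have "(of_int (T^2) :: rat) = of_int (N1 * N2)" using \<open>t^2 = _\<close> tT by simp
    then show ?thesis by (simp only: of_int_eq_iff)
  qed
  define l where "l = (yQ - yP) / (xQ - xP)"
  have lq: "l * (xQ - xP) = yQ - yP" using xne by (simp add: l_def)
  define x3 where "x3 = l^2 - xP - xQ"
  define N where "N = (x1+x2)*x1*x2 + A*s^2*(x1+x2) + 2*B*s^3 - 2*T"
  define D where "D = s * (x2 - x1)^2"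
  have Dpos: "D > 0" using spos x12 by (simp add: D_def)
  have "x3 * of_int D = of_int N"
    using sum_alg[OF xPs xQs lq eP eQ _ x3_def, of "of_int T"] tT by (simp add: D_def N_def t_def)
  then have x3e: "x3 = of_int N / of_int D" using Dpos by (simp add: field_simps)
  have sum: "ec_add A (Some (xP, yP)) (Some (xQ, yQ)) = Some (x3, l * (xP - x3) - yP)"
    using xne by (simp add: ec_add_some Let_def l_def x3_def)
  have hsum: "pt_h (ec_add A (Some (xP, yP)) (Some (xQ, yQ))) \<le> ln (real_of_int (max \<bar>N\<bar> \<bar>D\<bar>))"
    using sum x3e weil_h_frac_le[of D N] Dpos by (simp add: pt_h_def)
  define X1 where "X1 = real_of_int x1"
  define X2 where "X2 = real_of_int x2"
  define S where "S = real_of_int s"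
  have S1: "1 \<le> S" using spos by (simp add: S_def)
  have X1S: "S \<le> X1"
  proof -
    have "1 * S \<le> W * S" using hW S1 by (intro mult_right_mono) auto
    then show ?thesis using hWs by (simp add: X1_def S_def)
  qed
  have X1pos: "0 < X1" using S1 X1S by linarith
  have X12: "X1 < X2" using x12 by (simp add: X1_def X2_def)
  have WS: "W * S \<le> X1" using hWs by (simp add: X1_def S_def)
  have AS: "\<bar>real_of_int A\<bar> * S^2 \<le> X1^2"
  proof -
    have "\<bar>real_of_int A\<bar> * S^2 \<le> W^2 * S^2" using hA S1 by (intro mult_right_mono) auto
    also have "\<dots> = (W*S)^2" by (simp add: power_mult_distrib)
    also have "\<dots> \<le> X1^2" using WS hW S1 by (intro power_mono) auto
    finally show ?thesis .
  qed
  have BS: "\<bar>real_of_int B\<bar> * S^3 \<le> X1^3"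
  proof -
    have "\<bar>real_of_int B\<bar> * S^3 \<le> W^3 * S^3" using hB S1 by (intro mult_right_mono) auto
    also have "\<dots> = (W*S)^3" by (simp add: power_mult_distrib)
    also have "\<dots> \<le> X1^3" using WS hW S1 by (intro power_mono) auto
    finally show ?thesis .
  qed
  have X2S: "S \<le> X2" using X1S X12 by linarith
  have WS2: "W * S \<le> X2" using WS X12 by linarith
  have AS2: "\<bar>real_of_int A\<bar> * S^2 \<le> X2^2"
  proof -
    have "\<bar>real_of_int A\<bar> * S^2 \<le> W^2 * S^2" using hA S1 by (intro mult_right_mono) auto
    also have "\<dots> = (W*S)^2" by (simp add: power_mult_distrib)
    also have "\<dots> \<le> X2^2" using WS2 hW S1 by (intro power_mono) auto
    finally show ?thesis .
  qed
  have BS2: "\<bar>real_of_int B\<bar> * S^3 \<le> X2^3"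
  proof -
    have "\<bar>real_of_int B\<bar> * S^3 \<le> W^3 * S^3" using hB S1 by (intro mult_right_mono) auto
    also have "\<dots> = (W*S)^3" by (simp add: power_mult_distrib)
    also have "\<dots> \<le> X2^3" using WS2 hW S1 by (intro power_mono) auto
    finally show ?thesis .
  qed
  have N1nn: "0 \<le> real_of_int N1"
  proof -
    have "(0::rat) \<le> (of_int s)^3 * yP^2" using spos by simp
    then have "(0::rat) \<le> of_int N1" using N1e by simp
    then show ?thesis by simp
  qed
  have N2nn: "0 \<le> real_of_int N2"
  proof -
    have "(0::rat) \<le> (of_int s)^3 * yQ^2" using spos by simp
    then have "(0::rat) \<le> of_int N2" using N2e by simp
    then show ?thesis by simp
  qed
  have N1b: "real_of_int N1 \<le> 3 * X1^3"
  proof -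
    have "real_of_int N1 = X1^3 + real_of_int A * X1 * S^2 + real_of_int B * S^3"
      by (simp add: N1_def X1_def S_def)
    moreover have "\<bar>real_of_int A * X1 * S^2\<bar> \<le> X1^3"
    proof -
      have "\<bar>real_of_int A * X1 * S^2\<bar> = (\<bar>real_of_int A\<bar> * S^2) * X1" using X1pos by (simp add: abs_mult)
      also have "\<dots> \<le> X1^2 * X1" using AS X1pos by (intro mult_right_mono) auto
      finally show ?thesis by (simp add: power3_eq_cube power2_eq_square)
    qed
    moreover have "\<bar>real_of_int B * S^3\<bar> \<le> X1^3" using BS S1 by (simp add: abs_mult)
    ultimately show ?thesis by (simp add: abs_le_iff)
  qed
  have N2b: "real_of_int N2 \<le> 3 * X2^3"
  proof -
    have X2pos: "0 < X2" using X1pos X12 by linarith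
    have "real_of_int N2 = X2^3 + real_of_int A * X2 * S^2 + real_of_int B * S^3"
      by (simp add: N2_def X2_def S_def)
    moreover have "\<bar>real_of_int A * X2 * S^2\<bar> \<le> X2^3"
    proof -
      have "\<bar>real_of_int A * X2 * S^2\<bar> = (\<bar>real_of_int A\<bar> * S^2) * X2" using X2pos by (simp add: abs_mult)
      also have "\<dots> \<le> X2^2 * X2" using AS2 X2pos by (intro mult_right_mono) auto
      finally show ?thesis by (simp add: power3_eq_cube power2_eq_square)
    qed
    moreover have "\<bar>real_of_int B * S^3\<bar> \<le> X2^3" using BS2 S1 by (simp add: abs_mult)
    ultimately show ?thesis by (simp add: abs_le_iff)
  qed
  have Tb: "\<bar>real_of_int T\<bar> \<le> 3 * X1 * X2^2"
  proof -
    have "(real_of_int T)^2 = real_of_int N1 * real_of_int N2" using T2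
      by (metis of_int_mult of_int_power)
    also have "\<dots> \<le> (3 * X1^3) * (3 * X2^3)" using N1b N2b N1nn N2nn X1pos by (intro mult_mono) auto
    also have "\<dots> \<le> (3 * X1 * X2^2)^2"
    proof -
      have "X1^3 * X2^3 \<le> X1^2 * X2^4"
      proof -
        have "X1^3 * X2^3 = (X1^2 * X2^3) * X1" by (simp add: algebra_simps power3_eq_cube power2_eq_square)
        also have "\<dots> \<le> (X1^2 * X2^3) * X2" using X12 X1pos by (intro mult_left_mono) auto
        also have "\<dots> = X1^2 * X2^4" by (simp add: algebra_simps power3_eq_cube power2_eq_square power4_eq_xxxx)
        finally show ?thesis .
      qed
      then show ?thesis by (simp add: power_mult_distrib algebra_simps power2_eq_square power4_eq_xxxx)
    qed
    finally have "(real_of_int T)^2 \<le> (3 * X1 * X2^2)^2" .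
    moreover have "0 \<le> 3 * X1 * X2^2" using X1pos by simp
    ultimately show ?thesis using power2_le_imp_le[of "\<bar>real_of_int T\<bar>" "3 * X1 * X2^2"] by simp
  qed
  have Nb: "\<bar>real_of_int N\<bar> \<le> 12 * X1 * X2^2"
  proof -
    have e: "real_of_int N = (X1+X2)*X1*X2 + (real_of_int A*S^2)*(X1+X2) + 2*(real_of_int B*S^3) - 2*real_of_int T"
      by (simp add: N_def X1_def X2_def S_def)
    have t1: "\<bar>(X1+X2)*X1*X2\<bar> \<le> 2 * X1 * X2^2"
    proof -
      have "(X1+X2)*X1*X2 \<le> (X2+X2)*X1*X2" using X12 X1pos by (intro mult_right_mono) auto
      moreover have "0 \<le> (X1+X2)*X1*X2" using X1pos X12 by simp
      ultimately show ?thesis by (simp add: power2_eq_square algebra_simps)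
    qed
    have t2: "\<bar>(real_of_int A*S^2)*(X1+X2)\<bar> \<le> 2 * X1 * X2^2"
    proof -
      have "\<bar>(real_of_int A*S^2)*(X1+X2)\<bar> = (\<bar>real_of_int A\<bar>*S^2)*(X1+X2)" using X1pos X12 by (simp add: abs_mult)
      also have "\<dots> \<le> X1^2 * (X1+X2)" using AS X1pos X12 by (intro mult_right_mono) auto
      also have "\<dots> \<le> X1 * X2 * (X2 + X2)" using X1pos X12
        by (intro mult_mono) (auto simp: power2_eq_square)
      finally show ?thesis by (simp add: power2_eq_square algebra_simps)
    qed
    have t3: "\<bar>real_of_int B*S^3\<bar> \<le> X1 * X2^2"
    proof -
      have "\<bar>real_of_int B*S^3\<bar> \<le> X1^3" using BS S1 by (simp add: abs_mult)
      also have "X1^3 \<le> X1 * X2^2" using X1pos X12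
        by (simp add: power3_eq_cube power2_eq_square mult_mono mult_left_mono)
      finally show ?thesis .
    qed
    show ?thesis unfolding e using t1 t2 t3 Tb by (simp add: abs_le_iff)
  qed
  have Db: "\<bar>real_of_int D\<bar> \<le> 12 * X1 * X2^2"
  proof -
    have "real_of_int D = S * (X2 - X1)^2" by (simp add: D_def S_def X1_def X2_def)
    also have "\<dots> \<le> X1 * X2^2" using X1S X12 X1pos S1
      by (intro mult_mono power_mono) auto
    also have "\<dots> \<le> 12 * X1 * X2^2" using X1pos by simp
    finally show ?thesis using Dpos by simp
  qed
  have "ln (real_of_int (max \<bar>N\<bar> \<bar>D\<bar>)) \<le> ln (12 * X1 * X2^2)"
    using Nb Db Dpos by (intro lnmono') auto
  also have "\<dots> = ln 12 + ln X1 + 2 * ln X2" using X1pos X12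
    by (simp add: ln_mult ln_realpow)
  finally show ?thesis using hsum by (simp add: xP_def xQ_def X1_def X2_def)
qed


lemma disc_rel: fixes a1 a2 a3 a4 a6 :: int
  shows "4*(-27*wc4 a1 a2 a3 a4 a6)^3 + 27*(-54*wc6 a1 a2 a3 a4 a6)^2 = -136048896 * wdisc a1 a2 a3 a4 a6"
  unfolding wc4_def wc6_def wdisc_def wb2_def wb4_def wb6_def wb8_def by algebra

lemma final_ineq:
  fixes p q h L \<delta> \<gamma> M \<alpha> E :: real
  assumes pL: "p > M*L" and qL: "q > M*L" and M: "M > 0" and L: "L > 0"
    and ratio: "max (q/p) (p/q) \<le> \<alpha>" and hb: "h - p - q \<le> q + E"
    and Eb: "E \<le> (2 + 3*\<delta>/\<gamma>)*L" and d: "\<delta> \<ge> 0" and g: "\<gamma> > 0"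
  shows "(h - p - q) / (2 * sqrt (p*q)) \<le> sqrt \<alpha> / 2 + 3*\<delta>/(2*M*\<gamma>) + 1/M"
proof -
  have hML: "M*L > 0" using M L by simp
  have pp: "p > 0" and qp: "q > 0" using pL qL hML by linarith+
  define r where "r = sqrt (p*q)"
  have rpos: "r > 0" using pp qp by (simp add: r_def)
  have qa: "q \<le> \<alpha> * p" using ratio pp by (simp add: pos_divide_le_eq)
  have apos: "\<alpha> \<ge> 0" using qa pp qp by (smt (verit) mult_nonpos_nonneg)
  have "q^2 \<le> \<alpha> * (p*q)" using qa qp by (simp add: power2_eq_square mult_right_mono algebra_simps)
  then have "sqrt (q^2) \<le> sqrt (\<alpha> * (p*q))" by (rule real_sqrt_le_mono)
  then have q1: "q \<le> sqrt \<alpha> * r" using qp by (simp add: r_def real_sqrt_mult)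
  have "(M*L)^2 < p*q" using pL qL hML by (simp add: power2_eq_square mult_strict_mono)
  then have "sqrt ((M*L)^2) < r" unfolding r_def by (rule real_sqrt_less_mono)
  then have rML: "M*L < r" using hML by simp
  define K where "K = 2 + 3*\<delta>/\<gamma>"
  have "0 \<le> 3*\<delta>/\<gamma>" using d g by simp
  then have Kpos: "K > 0" by (simp add: K_def)
  have "K * (M*L) \<le> K * r" using rML Kpos by simp
  then have "K * L \<le> K * r / M" using M by (simp add: field_simps)
  then have E2: "E \<le> K * r / M" using Eb by (simp add: K_def)
  have "h - p - q \<le> sqrt \<alpha> * r + K * r / M" using hb q1 E2 by linarith
  then have "(h - p - q) / (2*r) \<le> (sqrt \<alpha> * r + K * r / M) / (2*r)"
    using rpos by (intro divide_right_mono) auto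
  also have "\<dots> = sqrt \<alpha> / 2 + K / (2*M)" using rpos M by (simp add: field_simps)
  also have "\<dots> = sqrt \<alpha> / 2 + 3*\<delta>/(2*M*\<gamma>) + 1/M" using M g by (simp add: K_def field_simps)
  finally show ?thesis by (simp add: r_def)
qed


theorem theorem3p5:
  fixes \<delta> \<gamma> M \<alpha> :: real
  assumes "0 \<le> \<delta>" "\<delta> \<le> 1" "\<gamma> > 0" "M > 0" "\<alpha> > 1"
  shows "\<exists>X0 :: real. \<forall>(a1::int) a2 a3 a4 a6 (A::int) (B::int) (x1::int) (x2::int) (s::int)
            (yP::rat) (yQ::rat).
     global_minimal a1 a2 a3 a4 a6 \<longrightarrow>
     A = -27 * wc4 a1 a2 a3 a4 a6 \<longrightarrow>
     B = -54 * wc6 a1 a2 a3 a4 a6 \<longrightarrow>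
     (let X = real_of_int (max (\<bar>A\<bar>^3) (B^2));
          P = Some (of_int x1 / of_int s, yP);
          Q = Some (of_int x2 / of_int s, yQ)
      in X \<ge> X0 \<longrightarrow>
         on_curve A B P \<longrightarrow> on_curve A B Q \<longrightarrow>
         s > 0 \<longrightarrow>
         X powr (1/6) \<le> real_of_int x1 / real_of_int s \<longrightarrow>
         real_of_int x1 / real_of_int s < real_of_int x2 / real_of_int s \<longrightarrow>
         real_of_int (gcd x1 s) \<le> real_of_int s powr \<delta> \<longrightarrow>
         real_of_int (gcd x2 s) \<le> real_of_int s powr \<delta> \<longrightarrow>
         weil_h (of_int s) \<le> (1 / \<gamma>) * ln X \<longrightarrow>
         can_h A P > M * ln X \<longrightarrow>
         can_h A Q > M * ln X \<longrightarrow>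
         max (can_h A Q / can_h A P) (can_h A P / can_h A Q) \<le> \<alpha> \<longrightarrow>
         cos_theta A P Q \<le> sqrt \<alpha> / 2 + 3 * \<delta> / (2 * M * \<gamma>) + 1 / M)"
proof -
  define c :: real where "c = ln 1000 + ln 12 / 3 + ln 12"
  have l12: "0 < ln (12::real)" and l1000: "0 < ln (1000::real)" by simp_all
  have cpos: "c > 0" unfolding c_def using l12 l1000 by linarith
  define X0 where "X0 = exp (9 * c)"
  show ?thesis
  proof (rule exI[of _ X0], intro allI impI)
    fix a1 a2 a3 a4 a6 A B x1 x2 s :: int and yP yQ :: rat
    assume gm: "global_minimal a1 a2 a3 a4 a6" and eA: "A = -27 * wc4 a1 a2 a3 a4 a6"
      and eB: "B = -54 * wc6 a1 a2 a3 a4 a6"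
    define X where "X = real_of_int (max (\<bar>A\<bar>^3) (B^2))"
    define P where "P = Some (of_int x1 / of_int s :: rat, yP)"
    define Q where "Q = Some (of_int x2 / of_int s :: rat, yQ)"
    have main: "cos_theta A P Q \<le> sqrt \<alpha> / 2 + 3 * \<delta> / (2 * M * \<gamma>) + 1 / M"
      if hX: "X \<ge> X0" and cP: "on_curve A B P" and cQ: "on_curve A B Q" and spos: "s > 0"
        and hx1: "X powr (1/6) \<le> real_of_int x1 / real_of_int s"
        and x12r: "real_of_int x1 / real_of_int s < real_of_int x2 / real_of_int s"
        and g1: "real_of_int (gcd x1 s) \<le> real_of_int s powr \<delta>"
        and g2: "real_of_int (gcd x2 s) \<le> real_of_int s powr \<delta>"
        and hs: "weil_h (of_int s) \<le> (1 / \<gamma>) * ln X"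
        and hP: "can_h A P > M * ln X" and hQ: "can_h A Q > M * ln X"
        and rat: "max (can_h A Q / can_h A P) (can_h A P / can_h A Q) \<le> \<alpha>"
    proof -
      define L where "L = ln X"
      have X0pos: "X0 > 0" by (simp add: X0_def)
      have Xpos: "X > 0" using hX X0pos by linarith
      have L9: "9 * c \<le> L"
      proof -
        have "ln X0 \<le> ln X" by (rule lnmono[OF X0pos hX])
        then show ?thesis by (simp add: X0_def L_def)
      qed
      have Lpos: "L > 0" using L9 cpos by linarith
      have X1: "1 \<le> X" using ln_gt_zero_iff[OF Xpos] Lpos unfolding L_def by simp
      define W where "W = X powr (1/6)"
      have Wpos: "W > 0" using Xpos by (simp add: W_def)
      have W1: "1 \<le> W" using X1 by (simp add: W_def ge_one_powr_ge_zero)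
      have W6: "W^6 = X"
      proof -
        have "W^6 = X powr (real 6 * (1/6))" unfolding W_def using Xpos by (rule powr_power[OF less_imp_neq[symmetric]])
        also have "\<dots> = X" using Xpos by simp
        finally show ?thesis .
      qed
      have lnW: "ln W = L / 6" using Xpos by (simp add: W_def L_def)
      have hA: "real_of_int \<bar>A\<bar> \<le> W^2"
      proof (rule ccontr)
        assume "\<not> ?thesis"
        then have "(W^2)^3 < (real_of_int \<bar>A\<bar>)^3" using Wpos by (intro power_strict_mono) auto
        then have "X < real_of_int (\<bar>A\<bar>^3)" using W6 by (simp add: power_mult[symmetric])
        moreover have "real_of_int (\<bar>A\<bar>^3) \<le> X" unfolding X_def of_int_le_iff by (rule max.cobounded1)
        ultimately show False by linarith
      qed
      have hB: "real_of_int \<bar>B\<bar> \<le> W^3"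
      proof (rule ccontr)
        assume "\<not> ?thesis"
        then have "(W^3)^2 < (real_of_int \<bar>B\<bar>)^2" using Wpos by (intro power_strict_mono) auto
        then have "X < real_of_int (B^2)" using W6 by (simp add: power_mult[symmetric])
        moreover have "real_of_int (B^2) \<le> X" unfolding X_def of_int_le_iff by (rule max.cobounded2)
        ultimately show False by linarith
      qed
      have wd: "wdisc a1 a2 a3 a4 a6 \<noteq> 0" using gm unfolding global_minimal_def by blast
      have hD: "4*A^3+27*B^2 \<noteq> 0"
        unfolding eA eB disc_rel using wd by simp
      define Cu where "Cu = ln (12 * W^4)"
      define Cl where "Cl = ln (1000 * W^10)"
      have Cue: "Cu = ln 12 + 2/3 * L" using Wpos by (simp add: Cu_def ln_mult ln_realpow lnW)
      have Cle: "Cl = ln 1000 + 5/3 * L" using Wpos by (simp add: Cl_def ln_mult ln_realpow lnW)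
      note db = dbl_bounds[OF hA hB W1 hD]
      have up: "\<And>S. on_curve A B S \<Longrightarrow> pt_h (ec_add A S S) \<le> 4 * pt_h S + Cu"
        using db(1) by (simp add: Cu_def)
      have lo: "\<And>S. on_curve A B S \<Longrightarrow> 4 * pt_h S \<le> pt_h (ec_add A S S) + Cl"
        using db(2) by (simp add: Cl_def)
      have sr: "real_of_int s > 0" using spos by simp
      have "real_of_int x1 / real_of_int s * real_of_int s < real_of_int x2 / real_of_int s * real_of_int s"
        by (rule mult_strict_right_mono[OF x12r sr])
      then have x12: "x1 < x2" using sr by simp
      have xne: "(of_int x1 / of_int s :: rat) \<noteq> of_int x2 / of_int s" using x12 spos by simp
      have cS: "on_curve A B (ec_add A P Q)" unfolding P_def Q_def
        by (rule on_curve_add[OF cP[unfolded P_def] cQ[unfolded Q_def] xne])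
      have bP: "pt_h P - Cl/3 \<le> can_h A P" using canh_bounds[OF up lo cP] by blast
      have bQ: "pt_h Q - Cl/3 \<le> can_h A Q" using canh_bounds[OF up lo cQ] by blast
      have bS: "can_h A (ec_add A P Q) \<le> pt_h (ec_add A P Q) + Cu/3" using canh_bounds[OF up lo cS] by blast
      have Ws: "W * real_of_int s \<le> real_of_int x1" using hx1 sr by (simp add: W_def pos_le_divide_eq)
      have hsum: "pt_h (ec_add A P Q) \<le> ln 12 + ln (real_of_int x1) + 2 * ln (real_of_int x2)"
        unfolding P_def Q_def
        by (rule sum_bound[OF cP[unfolded P_def] cQ[unfolded Q_def] spos hA hB Ws W1 x12])
      have sx1: "s \<le> x1"
      proof -
        have "1 * real_of_int s \<le> W * real_of_int s" using W1 sr by (intro mult_right_mono) auto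
        then show ?thesis using Ws by simp
      qed
      have lns: "ln (real_of_int s) \<le> L / \<gamma>" using hs weil_h_int[OF spos] by (simp add: L_def)
      have lnsnn: "0 \<le> ln (real_of_int s)" using spos by simp
      have hpt: "ln (real_of_int xi) \<le> pt_h (Some (of_int xi / of_int s, y)) + \<delta> * L / \<gamma>"
        if sxi: "s \<le> xi" and gi: "real_of_int (gcd xi s) \<le> real_of_int s powr \<delta>" for xi y
      proof -
        have gpos: "gcd xi s > 0" using spos by simp
        have "pt_h (Some (of_int xi / of_int s, y)) = ln (real_of_int xi / real_of_int (gcd xi s))"
          using weil_h_frac[of s xi] spos sxi by (simp add: pt_h_def max_def)
        also have "\<dots> = ln (real_of_int xi) - ln (real_of_int (gcd xi s))"
          using gpos spos sxi by (simp add: ln_div)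
        finally have e: "pt_h (Some (of_int xi / of_int s, y)) = ln (real_of_int xi) - ln (real_of_int (gcd xi s))" .
        have "ln (real_of_int (gcd xi s)) \<le> ln (real_of_int s powr \<delta>)" using gi gpos by (intro lnmono) auto
        also have "\<dots> = \<delta> * ln (real_of_int s)" using sr by simp
        also have "\<dots> \<le> \<delta> * (L / \<gamma>)" using lns assms(1) by (intro mult_left_mono) auto
        finally show ?thesis using e by simp
      qed
      have h1: "ln (real_of_int x1) \<le> pt_h P + \<delta> * L / \<gamma>" unfolding P_def by (rule hpt[OF sx1 g1])
      have h2: "ln (real_of_int x2) \<le> pt_h Q + \<delta> * L / \<gamma>" unfolding Q_def using x12 sx1 by (intro hpt g2) auto
      define E where "E = ln 12 + Cu/3 + Cl + 3 * (\<delta> * L / \<gamma>)"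
      have hb: "can_h A (ec_add A P Q) - can_h A P - can_h A Q \<le> can_h A Q + E"
      proof -
        define dl where "dl = \<delta> * L / \<gamma>"
        define hS where "hS = can_h A (ec_add A P Q)"
        define p where "p = can_h A P"
        define q where "q = can_h A Q"
        define l1 where "l1 = ln (real_of_int x1)"
        define l2 where "l2 = ln (real_of_int x2)"
        have "hS \<le> pt_h (ec_add A P Q) + Cu/3" using bS by (simp add: hS_def)
        moreover have "pt_h (ec_add A P Q) \<le> ln 12 + l1 + 2 * l2" using hsum by (simp add: l1_def l2_def)
        moreover have "l1 \<le> pt_h P + dl" using h1 by (simp add: l1_def dl_def)
        moreover have "l2 \<le> pt_h Q + dl" using h2 by (simp add: l2_def dl_def)
        moreover have "pt_h P - Cl/3 \<le> p" using bP by (simp add: p_def)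
        moreover have "pt_h Q - Cl/3 \<le> q" using bQ by (simp add: q_def)
        ultimately have "hS - p - q \<le> q + (ln 12 + Cu/3 + Cl + 3 * dl)" by linarith
        then show ?thesis by (simp add: hS_def p_def q_def E_def dl_def)
      qed
      have Eb: "E \<le> (2 + 3*\<delta>/\<gamma>) * L"
      proof -
        have "E = c + 17/9 * L + 3 * (\<delta> * L / \<gamma>)" unfolding E_def Cue Cle c_def by (simp add: field_simps)
        also have "\<dots> \<le> (2 + 3*\<delta>/\<gamma>) * L" using L9 by (simp add: algebra_simps)
        finally show ?thesis .
      qed
      have "(can_h A (ec_add A P Q) - can_h A P - can_h A Q) / (2 * sqrt (can_h A P * can_h A Q))
          \<le> sqrt \<alpha> / 2 + 3*\<delta>/(2*M*\<gamma>) + 1/M"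
        by (rule final_ineq[OF hP[folded L_def] hQ[folded L_def] assms(4) Lpos rat hb Eb assms(1) assms(3)])
      then show ?thesis by (simp add: cos_theta_def)
    qed
    show "let X = real_of_int (max (\<bar>A\<bar>^3) (B^2));
          P = Some (of_int x1 / of_int s, yP);
          Q = Some (of_int x2 / of_int s, yQ)
      in X \<ge> X0 \<longrightarrow>
         on_curve A B P \<longrightarrow> on_curve A B Q \<longrightarrow>
         s > 0 \<longrightarrow>
         X powr (1/6) \<le> real_of_int x1 / real_of_int s \<longrightarrow>
         real_of_int x1 / real_of_int s < real_of_int x2 / real_of_int s \<longrightarrow>
         real_of_int (gcd x1 s) \<le> real_of_int s powr \<delta> \<longrightarrow>
         real_of_int (gcd x2 s) \<le> real_of_int s powr \<delta> \<longrightarrow>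
         weil_h (of_int s) \<le> (1 / \<gamma>) * ln X \<longrightarrow>
         can_h A P > M * ln X \<longrightarrow>
         can_h A Q > M * ln X \<longrightarrow>
         max (can_h A Q / can_h A P) (can_h A P / can_h A Q) \<le> \<alpha> \<longrightarrow>
         cos_theta A P Q \<le> sqrt \<alpha> / 2 + 3 * \<delta> / (2 * M * \<gamma>) + 1 / M"
      unfolding Let_def X_def[symmetric] P_def[symmetric] Q_def[symmetric]
      apply (intro impI)
      apply (rule main)
                 apply assumption+
      done
  qed
qed


end
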